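(* Let $S\subseteq\Sigma^n$ be a complementable double-code and $i,i'\in[n]$. Then $\backslash_i\backslash_{i'}S=\backslash_{i'}\backslash_i S$.
   Context: Let $\Sigma=\{0,1,2,3\}$, $[n]=\{1,\ldots,n\}$. An $i$-line of $\Sigma^n$ is a set of the four words that agree in all coordinates except the $i$th; a line is an $i$-line for some $i$. A double-code is a set meeting every line in $0$ or $2$ elements; a double-MDS-code is a set meeting every line in exactly $2$ elements; a double-code is complementable if contained in a double-MDS-code. For $S\subseteq\Sigma^n$ and $i\in[n]$, $\mathcal E_i(S)$ is the union of all $i$-lines that meet $S$, and $\backslash_i S=\mathcal E_i(S)\setminus S$. *)

theory Defs
  imports Main
begin

text \<open>Words of Sigma^n with Sigma = {0,1,2,3}: functions nat => nat, coordinates 1..n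
  take values < 4, all other coordinates are 0.\<close>

definition words :: "nat \<Rightarrow> (nat \<Rightarrow> nat) set" where
  "words n = {x. \<forall>j. (j \<in> {1..n} \<longrightarrow> x j < 4) \<and> (j \<notin> {1..n} \<longrightarrow> x j = 0)}"

definition iline :: "nat \<Rightarrow> (nat \<Rightarrow> nat) \<Rightarrow> (nat \<Rightarrow> nat) set" where
  "iline i x = {x(i := a) | a. a < (4::nat)}"

definition ilines :: "nat \<Rightarrow> nat \<Rightarrow> (nat \<Rightarrow> nat) set set" where
  "ilines n i = {iline i x | x. x \<in> words n}"

definition lines :: "nat \<Rightarrow> (nat \<Rightarrow> nat) set set" where
  "lines n = (\<Union>i\<in>{1..n}. ilines n i)"

definition double_code :: "nat \<Rightarrow> (nat \<Rightarrow> nat) set \<Rightarrow> bool" where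
  "double_code n S \<longleftrightarrow> S \<subseteq> words n \<and>
     (\<forall>L\<in>lines n. card (L \<inter> S) = 0 \<or> card (L \<inter> S) = 2)"

definition double_MDS_code :: "nat \<Rightarrow> (nat \<Rightarrow> nat) set \<Rightarrow> bool" where
  "double_MDS_code n S \<longleftrightarrow> S \<subseteq> words n \<and> (\<forall>L\<in>lines n. card (L \<inter> S) = 2)"

definition complementable :: "nat \<Rightarrow> (nat \<Rightarrow> nat) set \<Rightarrow> bool" where
  "complementable n S \<longleftrightarrow> double_code n S \<and> (\<exists>M. double_MDS_code n M \<and> S \<subseteq> M)"

definition ext :: "nat \<Rightarrow> nat \<Rightarrow> (nat \<Rightarrow> nat) set \<Rightarrow> (nat \<Rightarrow> nat) set" where
  "ext n i S = \<Union>{L \<in> ilines n i. L \<inter> S \<noteq> {}}"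

definition bsl :: "nat \<Rightarrow> nat \<Rightarrow> (nat \<Rightarrow> nat) set \<Rightarrow> (nat \<Rightarrow> nat) set" where
  "bsl n i S = ext n i S - S"

end

theory Submission
  imports Defs
begin

definition two4 :: "bool \<Rightarrow> bool \<Rightarrow> bool \<Rightarrow> bool \<Rightarrow> bool" where
 "two4 p q r t \<longleftrightarrow> (p\<and>q\<and>\<not>r\<and>\<not>t) \<or> (p\<and>\<not>q\<and>r\<and>\<not>t) \<or> (p\<and>\<not>q\<and>\<not>r\<and>t) \<or> (\<not>p\<and>q\<and>r\<and>\<not>t) \<or> (\<not>p\<and>q\<and>\<not>r\<and>t) \<or> (\<not>p\<and>\<not>q\<and>r\<and>t)"
definition zt4 :: "bool \<Rightarrow> bool \<Rightarrow> bool \<Rightarrow> bool \<Rightarrow> bool" where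
 "zt4 p q r t \<longleftrightarrow> two4 p q r t \<or> (\<not>p\<and>\<not>q\<and>\<not>r\<and>\<not>t)"
lemma all4: "(\<forall>b<(4::nat). P b) = (P 0 \<and> P 1 \<and> P 2 \<and> P 3)"
  by (auto simp: less_Suc_eq numeral_eq_Suc)
lemma ex4: "(\<exists>b<(4::nat). P b) = (P 0 \<or> P 1 \<or> P 2 \<or> P 3)"
  by (auto simp: less_Suc_eq numeral_eq_Suc)

lemma dich:
  fixes s m :: "nat \<Rightarrow> nat \<Rightarrow> bool"
  assumes "\<forall>b<4. zt4 (s 0 b) (s 1 b) (s 2 b) (s 3 b)"
    "\<forall>a<4. zt4 (s a 0) (s a 1) (s a 2) (s a 3)"
    "\<forall>b<4. two4 (m 0 b) (m 1 b) (m 2 b) (m 3 b)"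
    "\<forall>a<4. two4 (m a 0) (m a 1) (m a 2) (m a 3)"
    "\<forall>a<4. \<forall>b<4. s a b \<longrightarrow> m a b"
  shows "(\<forall>a<4. \<forall>b<4. s a b = ((\<exists>b<4. s a b) \<and> (\<exists>a<4. s a b))) \<or> ((\<forall>a<4. \<exists>b<4. s a b) \<and> (\<forall>b<4. \<exists>a<4. s a b))"
  apply (insert assms)
  apply (unfold all4 ex4 zt4_def two4_def)
  by (smt (z3))

lemma grid:
  fixes s m :: "nat \<Rightarrow> nat \<Rightarrow> bool"
  assumes "\<forall>b<4. zt4 (s 0 b) (s 1 b) (s 2 b) (s 3 b)"
    "\<forall>a<4. zt4 (s a 0) (s a 1) (s a 2) (s a 3)"
    "\<forall>b<4. two4 (m 0 b) (m 1 b) (m 2 b) (m 3 b)"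
    "\<forall>a<4. two4 (m a 0) (m a 1) (m a 2) (m a 3)"
    "\<forall>a<4. \<forall>b<4. s a b \<longrightarrow> m a b"
    and a0: "a0 < 4" and b0: "b0 < 4"
  shows "(\<not>(\<not>s a0 b0 \<and> (\<exists>b<4. s a0 b)) \<and> (\<exists>a<4. \<not>s a b0 \<and> (\<exists>b<4. s a b)))
   \<longleftrightarrow> (\<not>(\<not>s a0 b0 \<and> (\<exists>a<4. s a b0)) \<and> (\<exists>b<4. \<not>s a0 b \<and> (\<exists>a<4. s a b)))"
proof -
  have nfr: "\<forall>a<4. \<exists>b<4. \<not> s a b" using assms(2) unfolding all4 ex4 zt4_def two4_def by blast
  have nfc: "\<forall>b<4. \<exists>a<4. \<not> s a b" using assms(1) unfolding all4 ex4 zt4_def two4_def by blast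
  from dich[OF assms(1-5)] show ?thesis
  proof
    assume 1: "\<forall>a<4. \<forall>b<4. s a b = ((\<exists>b<4. s a b) \<and> (\<exists>a<4. s a b))"
    show ?thesis
    proof (cases "\<exists>a<4. \<exists>b<4. s a b")
      case True
      define R where "R a = (\<exists>b<4. s a b)" for a
      define C where "C b = (\<exists>a<4. s a b)" for b
      have e: "\<forall>a<4. \<forall>b<4. s a b = (R a \<and> C b)" using 1 unfolding R_def C_def by blast
      obtain a1 b1 where "a1 < 4" "b1 < 4" "s a1 b1" using True by blast
      hence r1: "R a1" and c1: "C b1" unfolding R_def C_def by blast+
      have L: "(\<not>(\<not>s a0 b0 \<and> (\<exists>b<4. s a0 b)) \<and> (\<exists>a<4. \<not>s a b0 \<and> (\<exists>b<4. s a b))) = (\<not> R a0 \<and> \<not> C b0)"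
        unfolding R_def[symmetric] using e a0 b0 r1 c1 \<open>a1 < 4\<close> R_def by blast
      have Rr: "(\<not>(\<not>s a0 b0 \<and> (\<exists>a<4. s a b0)) \<and> (\<exists>b<4. \<not>s a0 b \<and> (\<exists>a<4. s a b))) = (\<not> R a0 \<and> \<not> C b0)"
        unfolding C_def[symmetric] using e a0 b0 r1 c1 \<open>b1 < 4\<close> C_def by blast
      show ?thesis using L Rr by simp
    next
      case False
      then show ?thesis by blast
    qed
  next
    assume 2: "(\<forall>a<4. \<exists>b<4. s a b) \<and> (\<forall>b<4. \<exists>a<4. s a b)"
    have x1: "\<exists>b<4. s a0 b" "\<exists>a<4. s a b0" using 2 a0 b0 by blast+
    obtain a2 where "a2 < 4" "\<not> s a2 b0" using nfc b0 by blast
    obtain b2 where "b2 < 4" "\<not> s a0 b2" using nfr a0 by blast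
    have x2: "\<exists>a<4. \<not>s a b0 \<and> (\<exists>b<4. s a b)" using 2 \<open>a2 < 4\<close> \<open>\<not> s a2 b0\<close> by blast
    have x3: "\<exists>b<4. \<not>s a0 b \<and> (\<exists>a<4. s a b)" using 2 \<open>b2 < 4\<close> \<open>\<not> s a0 b2\<close> by blast
    show ?thesis using x1 x2 x3 by blast
  qed
qed



lemma upd_words: "x \<in> words n \<Longrightarrow> i \<in> {1..n} \<Longrightarrow> a < 4 \<Longrightarrow> x(i:=a) \<in> words n"
  unfolding words_def by auto

lemma words_lt: "x \<in> words n \<Longrightarrow> i \<in> {1..n} \<Longrightarrow> x i < 4"
  unfolding words_def by auto

lemma ext_char:
  assumes "T \<subseteq> words n" "i \<in> {1..n}"
  shows "x \<in> ext n i T \<longleftrightarrow> x \<in> words n \<and> (\<exists>a<4. x(i:=a) \<in> T)"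
proof
  assume "x \<in> ext n i T"
  then obtain y where y: "y \<in> words n" "x \<in> iline i y" "iline i y \<inter> T \<noteq> {}"
    unfolding ext_def ilines_def by auto
  then obtain a where a: "a < 4" "x = y(i:=a)" unfolding iline_def by auto
  from y obtain c where c: "c < 4" "y(i:=c) \<in> T" unfolding iline_def by auto
  have "x \<in> words n" using upd_words[OF y(1) assms(2) a(1)] a by simp
  moreover have "x(i:=c) \<in> T" using a c by simp
  ultimately show "x \<in> words n \<and> (\<exists>a<4. x(i:=a) \<in> T)" using c by blast
next
  assume h: "x \<in> words n \<and> (\<exists>a<4. x(i:=a) \<in> T)"
  then obtain a where a: "a < 4" "x(i:=a) \<in> T" by blast
  have L: "iline i x \<in> ilines n i" using h unfolding ilines_def by blast
  have "x \<in> iline i x" unfolding iline_def using words_lt[OF _ assms(2)] h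
    by (auto intro!: exI[of _ "x i"])
  moreover have "x(i:=a) \<in> iline i x \<inter> T" using a unfolding iline_def by auto
  ultimately show "x \<in> ext n i T" unfolding ext_def using L by blast
qed

lemma bsl_char:
  assumes "T \<subseteq> words n" "i \<in> {1..n}"
  shows "x \<in> bsl n i T \<longleftrightarrow> x \<in> words n \<and> x \<notin> T \<and> (\<exists>a<4. x(i:=a) \<in> T)"
  unfolding bsl_def using ext_char[OF assms] by blast

lemma bsl_words:
  assumes "T \<subseteq> words n" "i \<in> {1..n}"
  shows "bsl n i T \<subseteq> words n"
  using bsl_char[OF assms] by blast

lemma card_line:
  "card (iline i y \<inter> T) = card {a. a < 4 \<and> y(i:=a) \<in> T}"
proof -
  have "iline i y \<inter> T = (\<lambda>a. y(i:=a)) ` {a. a < 4 \<and> y(i:=a) \<in> T}"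
    unfolding iline_def by auto
  moreover have "inj_on (\<lambda>a. y(i:=a)) {a. a < 4 \<and> y(i:=a) \<in> T}"
    by (rule inj_onI) (metis fun_upd_same)
  ultimately show ?thesis by (simp add: card_image)
qed

lemma lt4: "(a::nat) < 4 \<longleftrightarrow> a = 0 \<or> a = 1 \<or> a = 2 \<or> a = 3" by auto
lemma set4: "{a. a < (4::nat) \<and> P a} = set (filter P [0,1,2,3])"
proof (rule set_eqI)
  fix x
  show "x \<in> {a. a < (4::nat) \<and> P a} \<longleftrightarrow> x \<in> set (filter P [0,1,2,3])"
    unfolding set_filter mem_Collect_eq lt4 by simp
qed

lemma card4: "card {a. a < (4::nat) \<and> P a} = length (filter P [0,1,2,3])"
  unfolding set4 by (rule distinct_card) simp

lemma card4_2: "card {a. a < (4::nat) \<and> P a} = 2 \<longleftrightarrow> two4 (P 0) (P 1) (P 2) (P 3)"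
  unfolding card4 two4_def by auto

lemma card4_0: "card {a. a < (4::nat) \<and> P a} = 0 \<longleftrightarrow> \<not> P 0 \<and> \<not> P 1 \<and> \<not> P 2 \<and> \<not> P 3"
  unfolding card4 by (cases "P 0"; cases "P 1"; cases "P 2"; cases "P 3") simp_all

lemma iline_lines: "y \<in> words n \<Longrightarrow> i \<in> {1..n} \<Longrightarrow> iline i y \<in> lines n"
  unfolding lines_def ilines_def by blast



theorem proposition6:
  fixes n i i' :: nat and S :: "(nat \<Rightarrow> nat) set"
  assumes "complementable n S"
    and "i \<in> {1..n}" and "i' \<in> {1..n}"
  shows "bsl n i (bsl n i' S) = bsl n i' (bsl n i S)"
proof (cases "i = i'")
  case True
  then show ?thesis by simp
next
  case False
  note hi = assms(2) and hi' = assms(3)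
  from assms(1) obtain M where dc: "double_code n S" and dm: "double_MDS_code n M" and SM: "S \<subseteq> M"
    unfolding complementable_def by blast
  have Sw: "S \<subseteq> words n" using dc unfolding double_code_def by blast
  have Sc: "\<And>L. L \<in> lines n \<Longrightarrow> card (L \<inter> S) = 0 \<or> card (L \<inter> S) = 2"
    using dc unfolding double_code_def by blast
  have Mc: "\<And>L. L \<in> lines n \<Longrightarrow> card (L \<inter> M) = 2"
    using dm unfolding double_MDS_code_def by blast
  have B1: "bsl n i' S \<subseteq> words n" by (rule bsl_words[OF Sw hi'])
  have B2: "bsl n i S \<subseteq> words n" by (rule bsl_words[OF Sw hi])
  have tw: "\<And>x a b. x(i':=b, i:=a) = x(i:=a, i':=b)" using False by (simp add: fun_upd_twist)
  show ?thesis
  proof (rule set_eqI)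
    fix x
    show "x \<in> bsl n i (bsl n i' S) \<longleftrightarrow> x \<in> bsl n i' (bsl n i S)"
    proof (cases "x \<in> words n")
      case False
      then show ?thesis using bsl_char[OF B1 hi] bsl_char[OF B2 hi'] by blast
    next
      case xw: True
      define s where "s a b = (x(i:=a, i':=b) \<in> S)" for a b
      define m where "m a b = (x(i:=a, i':=b) \<in> M)" for a b
      have a0: "x i < 4" and b0: "x i' < 4" using words_lt xw hi hi' by auto
      have cols: "\<forall>b<4. zt4 (s 0 b) (s 1 b) (s 2 b) (s 3 b)"
      proof (intro allI impI)
        fix b :: nat assume b: "b < 4"
        have yw: "x(i':=b) \<in> words n" using upd_words[OF xw hi' b] .
        have "card {a. a < 4 \<and> s a b} = 0 \<or> card {a. a < 4 \<and> s a b} = 2"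
          using Sc[OF iline_lines[OF yw hi]] unfolding card_line s_def tw .
        then show "zt4 (s 0 b) (s 1 b) (s 2 b) (s 3 b)" unfolding zt4_def card4_2 card4_0 by blast
      qed
      have rows: "\<forall>a<4. zt4 (s a 0) (s a 1) (s a 2) (s a 3)"
      proof (intro allI impI)
        fix a :: nat assume a: "a < 4"
        have yw: "x(i:=a) \<in> words n" using upd_words[OF xw hi a] .
        have "card {b. b < 4 \<and> s a b} = 0 \<or> card {b. b < 4 \<and> s a b} = 2"
          using Sc[OF iline_lines[OF yw hi']] unfolding card_line s_def .
        then show "zt4 (s a 0) (s a 1) (s a 2) (s a 3)" unfolding zt4_def card4_2 card4_0 by blast
      qed
      have mcols: "\<forall>b<4. two4 (m 0 b) (m 1 b) (m 2 b) (m 3 b)"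
      proof (intro allI impI)
        fix b :: nat assume b: "b < 4"
        have yw: "x(i':=b) \<in> words n" using upd_words[OF xw hi' b] .
        have "card {a. a < 4 \<and> m a b} = 2"
          using Mc[OF iline_lines[OF yw hi]] unfolding card_line m_def tw .
        then show "two4 (m 0 b) (m 1 b) (m 2 b) (m 3 b)" unfolding card4_2 .
      qed
      have mrows: "\<forall>a<4. two4 (m a 0) (m a 1) (m a 2) (m a 3)"
      proof (intro allI impI)
        fix a :: nat assume a: "a < 4"
        have yw: "x(i:=a) \<in> words n" using upd_words[OF xw hi a] .
        have "card {b. b < 4 \<and> m a b} = 2"
          using Mc[OF iline_lines[OF yw hi']] unfolding card_line m_def .
        then show "two4 (m a 0) (m a 1) (m a 2) (m a 3)" unfolding card4_2 .
      qed
      have sm: "\<forall>a<4. \<forall>b<4. s a b \<longrightarrow> m a b" using SM unfolding s_def m_def by blast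
      note G = grid[OF cols rows mcols mrows sm a0 b0]
      have xe: "x = x(i := x i, i' := x i')" by simp
      have e1: "x(i':=b) = x(i := x i, i' := b)" for b by simp
      have e2: "x(i:=a) = x(i' := x i', i := a)" for a by simp
      have e3: "(x(i:=a))(i':=x i') = x(i:=a)" for a using False by (auto simp: fun_eq_iff)
      have e4: "(x(i':=b))(i:=x i) = x(i':=b)" for b using False by (auto simp: fun_eq_iff)
      have inS: "(x \<in> S) = s (x i) (x i')" unfolding s_def by simp
      have m1: "x \<in> bsl n i' S \<longleftrightarrow> \<not> s (x i) (x i') \<and> (\<exists>b<4. s (x i) b)"
        using bsl_char[OF Sw hi'] xw unfolding s_def e1 by (simp del: fun_upd_apply)
      have m2: "x(i:=a) \<in> bsl n i' S \<longleftrightarrow> \<not> s a (x i') \<and> (\<exists>b<4. s a b)" if "a < 4" for a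
        using bsl_char[OF Sw hi', of "x(i:=a)"] upd_words[OF xw hi that] unfolding s_def e3 by simp
      have m3: "x \<in> bsl n i S \<longleftrightarrow> \<not> s (x i) (x i') \<and> (\<exists>a<4. s a (x i'))"
        using bsl_char[OF Sw hi] xw unfolding s_def tw[symmetric] e2 by (simp del: fun_upd_apply)
      have m4: "x(i':=b) \<in> bsl n i S \<longleftrightarrow> \<not> s (x i) b \<and> (\<exists>a<4. s a b)" if "b < 4" for b
        using bsl_char[OF Sw hi, of "x(i':=b)"] upd_words[OF xw hi' that] unfolding s_def tw[symmetric] e4 by simp
      have L: "x \<in> bsl n i (bsl n i' S) \<longleftrightarrow> \<not>(\<not>s (x i) (x i') \<and> (\<exists>b<4. s (x i) b)) \<and> (\<exists>a<4. \<not>s a (x i') \<and> (\<exists>b<4. s a b))"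
        using bsl_char[OF B1 hi] xw m1 m2 by blast
      have R: "x \<in> bsl n i' (bsl n i S) \<longleftrightarrow> \<not>(\<not>s (x i) (x i') \<and> (\<exists>a<4. s a (x i'))) \<and> (\<exists>b<4. \<not>s (x i) b \<and> (\<exists>a<4. s a b))"
        using bsl_char[OF B2 hi'] xw m3 m4 by blast
      show ?thesis using L R G by simp
    qed
  qed
qed
end
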